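(* Let $G$ be a locally free group, $D$ a finitely generated subgroup of $G$ with $\mu_{G}(D)=m$, and $M$ a subgroup of $G$ such that $D\subseteq M$ and $r(M)=m$. For $g\in G\setminus M$, let $M_g=M\langle g\rangle$ be the subgroup of $G$ generated by $g$ and the elements of $M$, and let $r(M_g)=n$. If $n>m$, then $n=m+1$ and there exists a free subgroup $F_m$ of rank $m$ in $M$ such that $D\subseteq F_m$ and the subgroup $F_m\langle g\rangle$ generated by $F_m$ and $g$ is isomorphic to the free product $F_m*\langle g\rangle$.
   Context: A group is locally free if all of its finitely generated subgroups are free. For a finitely generated subgroup $H$ of a locally free group $G$, $\mu_G(H)$ is the least positive integer $m$ such that $H\subseteq F$ for some free subgroup $F$ of $G$ of rank $m$. The rank $r(G)$ of a locally free group $G$ is the maximum of $\{\mu_G(H) : H \text{ a finitely generated subgroup of } G\}$ if this maximum exists, and $r(G)=\infty$ otherwise (subgroups of $G$ are locally free, so $\mu$ and $r$ apply to them as well). *)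

theory Defs
  imports "HOL-Algebra.Algebra" "HOL-Library.Extended_Nat"
begin

text \<open>Group words over an alphabet of elements: a letter (True, x) stands for x,
  a letter (False, x) stands for the inverse of x.\<close>

definition letter_val :: "('a, 'b) monoid_scheme \<Rightarrow> bool \<times> 'a \<Rightarrow> 'a" where
  "letter_val G l = (if fst l then snd l else inv\<^bsub>G\<^esub> (snd l))"

fun word_val :: "('a, 'b) monoid_scheme \<Rightarrow> (bool \<times> 'a) list \<Rightarrow> 'a" where
  "word_val G [] = \<one>\<^bsub>G\<^esub>"
| "word_val G (l # w) = letter_val G l \<otimes>\<^bsub>G\<^esub> word_val G w"

fun reduced_word :: "(bool \<times> 'a) list \<Rightarrow> bool" where
  "reduced_word [] = True"
| "reduced_word [l] = True"
| "reduced_word (l1 # l2 # w) =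
     (\<not> (snd l1 = snd l2 \<and> fst l1 \<noteq> fst l2) \<and> reduced_word (l2 # w))"

definition free_basis :: "('a, 'b) monoid_scheme \<Rightarrow> 'a set \<Rightarrow> bool" where
  "free_basis G B \<longleftrightarrow> B \<subseteq> carrier G \<and>
     (\<forall>w. w \<noteq> [] \<and> reduced_word w \<and> snd ` set w \<subseteq> B \<longrightarrow> word_val G w \<noteq> \<one>\<^bsub>G\<^esub>)"

definition free_subgroup_rank :: "('a, 'b) monoid_scheme \<Rightarrow> 'a set \<Rightarrow> nat \<Rightarrow> bool" where
  "free_subgroup_rank G F m \<longleftrightarrow>
     (\<exists>B. finite B \<and> card B = m \<and> free_basis G B \<and> generate G B = F)"

definition fin_gen_subgroup :: "('a, 'b) monoid_scheme \<Rightarrow> 'a set \<Rightarrow> bool" where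
  "fin_gen_subgroup G H \<longleftrightarrow> (\<exists>S. finite S \<and> S \<subseteq> carrier G \<and> H = generate G S)"

definition locally_free :: "('a, 'b) monoid_scheme \<Rightarrow> bool" where
  "locally_free G \<longleftrightarrow> group G \<and>
     (\<forall>H. fin_gen_subgroup G H \<longrightarrow> (\<exists>m. free_subgroup_rank G H m))"

text \<open>mu_in G M H: for a subgroup M of G (itself locally free) and a finitely generated
  subgroup H of M, the least positive m such that H lies in a free subgroup of M of rank m.
  mu_G(H) is mu_in G (carrier G) H.\<close>
definition mu_in :: "('a, 'b) monoid_scheme \<Rightarrow> 'a set \<Rightarrow> 'a set \<Rightarrow> nat" where
  "mu_in G M H = (LEAST m. 0 < m \<and> (\<exists>F. F \<subseteq> M \<and> free_subgroup_rank G F m \<and> H \<subseteq> F))"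

definition rank_lf :: "('a, 'b) monoid_scheme \<Rightarrow> 'a set \<Rightarrow> enat" where
  "rank_lf G M = Sup {enat (mu_in G M H) | H. fin_gen_subgroup G H \<and> H \<subseteq> M}"

text \<open>The subgroup generated by subgroups A and B is (canonically) their free product:
  no nonempty alternating product of nontrivial elements of A and B is trivial.\<close>
fun alternating :: "(bool \<times> 'a) list \<Rightarrow> bool" where
  "alternating [] = True"
| "alternating [l] = True"
| "alternating (l1 # l2 # w) = (fst l1 \<noteq> fst l2 \<and> alternating (l2 # w))"

definition internal_free_product :: "('a, 'b) monoid_scheme \<Rightarrow> 'a set \<Rightarrow> 'a set \<Rightarrow> bool" where
  "internal_free_product G A B \<longleftrightarrow> subgroup A G \<and> subgroup B G \<and>
     (\<forall>w. w \<noteq> [] \<and> alternating w \<and>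
          (\<forall>l\<in>set w. snd l \<noteq> \<one>\<^bsub>G\<^esub> \<and> (if fst l then snd l \<in> A else snd l \<in> B))
        \<longrightarrow> foldr (\<lambda>l x. snd l \<otimes>\<^bsub>G\<^esub> x) w \<one>\<^bsub>G\<^esub> \<noteq> \<one>\<^bsub>G\<^esub>)"

end

theory Submission
  imports Defs
begin

lemma word_val_carrier:
  "group G \<Longrightarrow> snd ` set w \<subseteq> carrier G \<Longrightarrow> word_val G w \<in> carrier G"
  by (induction w) (auto simp: letter_val_def group.inv_closed monoid.m_closed group.is_monoid)

lemma letter_val_carrier:
  "group G \<Longrightarrow> snd l \<in> carrier G \<Longrightarrow> letter_val G l \<in> carrier G"
  by (auto simp: letter_val_def group.inv_closed)

lemma word_val_append:
  assumes "group G" "snd ` set u \<subseteq> carrier G" "snd ` set v \<subseteq> carrier G"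
  shows "word_val G (u @ v) = word_val G u \<otimes>\<^bsub>G\<^esub> word_val G v"
  using assms(2)
proof (induction u)
  case Nil then show ?case using assms word_val_carrier[OF assms(1,3)] by (simp add: group.is_monoid monoid.l_one)
next
  case (Cons l u)
  then show ?case using assms word_val_carrier[of G u] word_val_carrier[of G v] letter_val_carrier[of G l]
    by (simp add: monoid.m_assoc group.is_monoid)
qed

lemma letter_cancel:
  assumes "group G" "y \<in> carrier G" "z \<in> carrier G" "s1 \<noteq> s2"
  shows "letter_val G (s1, y) \<otimes>\<^bsub>G\<^esub> (letter_val G (s2, y) \<otimes>\<^bsub>G\<^esub> z) = z"
proof -
  interpret group G by fact
  show ?thesis using assms by (cases s1; cases s2) (auto simp: letter_val_def m_assoc[symmetric])
qed

lemma not_reduced_split: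
  "\<not> reduced_word w \<Longrightarrow> \<exists>u l1 l2 v. w = u @ l1 # l2 # v \<and> snd l1 = snd l2 \<and> fst l1 \<noteq> fst l2"
proof (induction w rule: reduced_word.induct)
  case (3 l1 l2 w)
  show ?case
  proof (cases "snd l1 = snd l2 \<and> fst l1 \<noteq> fst l2")
    case True then show ?thesis by (metis append_Nil)
  next
    case False
    then have "\<not> reduced_word (l2 # w)" using 3(2) by simp
    from 3(1)[OF this] obtain u a b v where "l2 # w = u @ a # b # v" "snd a = snd b" "fst a \<noteq> fst b" by blast
    then show ?thesis by (metis append_Cons)
  qed
qed auto

lemma snd_image_apsnd [simp]: "snd ` apsnd f ` A = f ` snd ` A"
  by (auto simp: image_iff apsnd_def map_prod_def split: prod.splits) force+

lemma snd_set_apsnd: "snd ` set (map (apsnd f) u) = f ` snd ` set u"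
  by simp

definition cancel_step :: "(bool \<times> 'a) list \<Rightarrow> (bool \<times> 'a) list \<Rightarrow> bool" where
  "cancel_step w w' \<longleftrightarrow> (\<exists>u l1 l2 v. w = u @ l1 # l2 # v \<and> w' = u @ v \<and> snd l1 = snd l2 \<and> fst l1 \<noteq> fst l2)"

lemma cancel_step_set: "cancel_step w w' \<Longrightarrow> set w' \<subseteq> set w"
  unfolding cancel_step_def by auto

lemma red_set: "cancel_step\<^sup>*\<^sup>* w w' \<Longrightarrow> set w' \<subseteq> set w"
  by (induction rule: rtranclp_induct) (auto dest: cancel_step_set)

lemma cancel_step_val:
  assumes st: "cancel_step w w'" and Q: "group Q" "f ` snd ` set w \<subseteq> carrier Q"
  shows "word_val Q (map (apsnd f) w) = word_val Q (map (apsnd f) w')"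
proof -
  obtain u l1 l2 v where w: "w = u @ l1 # l2 # v" "w' = u @ v" "snd l1 = snd l2" "fst l1 \<noteq> fst l2"
    using st unfolding cancel_step_def by blast
  have c1: "snd ` set (map (apsnd f) u) \<subseteq> carrier Q" using Q(2) unfolding w(1) by (simp add: image_Un)
  have c2: "snd ` set (map (apsnd f) v) \<subseteq> carrier Q" using Q(2) unfolding w(1) by (simp add: image_Un)
  have c3: "f (snd l1) \<in> carrier Q" using Q(2) unfolding w(1) by (simp add: image_Un)
  have "word_val Q (map (apsnd f) w) = word_val Q (map (apsnd f) u) \<otimes>\<^bsub>Q\<^esub>
      (letter_val Q (fst l1, f (snd l1)) \<otimes>\<^bsub>Q\<^esub> (letter_val Q (fst l2, f (snd l1)) \<otimes>\<^bsub>Q\<^esub> word_val Q (map (apsnd f) v)))"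
    using w c1 c2 c3 word_val_append[OF Q(1) c1, of "map (apsnd f) (l1 # l2 # v)"]
    by (cases l1; cases l2) (auto simp: apsnd_def)
  also have "\<dots> = word_val Q (map (apsnd f) u) \<otimes>\<^bsub>Q\<^esub> word_val Q (map (apsnd f) v)"
    using letter_cancel[OF Q(1) c3 word_val_carrier[OF Q(1) c2] w(4)] by simp
  also have "\<dots> = word_val Q (map (apsnd f) w')"
    using word_val_append[OF Q(1) c1 c2] w(2) by simp
  finally show ?thesis .
qed

lemma red_val:
  assumes "cancel_step\<^sup>*\<^sup>* w w'" "group Q" "f ` snd ` set w \<subseteq> carrier Q"
  shows "word_val Q (map (apsnd f) w) = word_val Q (map (apsnd f) w')"
  using assms(1)
proof (induction rule: rtranclp_induct)
  case (step y z)
  have "set y \<subseteq> set w" using step(1) by (rule red_set)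
  then have "f ` snd ` set y \<subseteq> carrier Q" using assms(3) by blast
  then show ?case using step(3) cancel_step_val[OF step(2) assms(2)] by simp
qed simp

lemma reduce_ex: "\<exists>r. reduced_word r \<and> cancel_step\<^sup>*\<^sup>* w r"
proof (induction w rule: length_induct)
  case (1 w)
  show ?case
  proof (cases "reduced_word w")
    case True then show ?thesis by blast
  next
    case False
    then obtain u l1 l2 v where w: "w = u @ l1 # l2 # v" "snd l1 = snd l2" "fst l1 \<noteq> fst l2"
      using not_reduced_split by blast
    have st: "cancel_step w (u @ v)" unfolding cancel_step_def using w by blast
    have len: "length (u @ v) < length w" using w by simp
    from 1[rule_format, OF len] obtain r where "reduced_word r" "cancel_step\<^sup>*\<^sup>* (u @ v) r" by blast
    then show ?thesis using st by (meson converse_rtranclp_into_rtranclp)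
  qed
qed

lemma apsnd_eq: "apsnd f l = (fst l, f (snd l))" by (cases l) simp

lemma map_apsnd_id [simp]: "map (apsnd id) w = w" by (induction w) (auto simp: apsnd_eq)

definition iw :: "(bool \<times> 'a) list \<Rightarrow> (bool \<times> 'a) list" where
  "iw w = rev (map (\<lambda>l. (\<not> fst l, snd l)) w)"

lemma iw_simps [simp]: "iw [] = []" "iw (l # w) = iw w @ [(\<not> fst l, snd l)]"
  by (simp_all add: iw_def)

lemma snd_set_iw [simp]: "snd ` set (iw w) = snd ` set w"
  by (simp add: iw_def image_image)

lemma map_apsnd_iw: "map (apsnd f) (iw w) = iw (map (apsnd f) w)"
  by (induction w) (auto simp: apsnd_eq)

lemma letter_val_neg:
  "group G \<Longrightarrow> y \<in> carrier G \<Longrightarrow> letter_val G (\<not> s, y) = inv\<^bsub>G\<^esub> (letter_val G (s, y))"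
  by (cases s) (auto simp: letter_val_def group.inv_inv)

lemma word_val_iw:
  assumes G: "group G" shows "snd ` set w \<subseteq> carrier G \<Longrightarrow> word_val G (iw w) = inv\<^bsub>G\<^esub> (word_val G w)"
proof (induction w)
  case Nil then show ?case using G by (simp add: monoid.inv_one group.is_monoid)
next
  case (Cons l w)
  have l: "snd l \<in> carrier G" and wc: "snd ` set w \<subseteq> carrier G" using Cons by auto
  have lv: "letter_val G l \<in> carrier G" using l by (simp add: letter_val_carrier[OF G])
  have "word_val G (iw (l # w)) = word_val G (iw w) \<otimes>\<^bsub>G\<^esub> word_val G [(\<not> fst l, snd l)]"
    using word_val_append[OF G, of "iw w" "[(\<not> fst l, snd l)]"] wc l by simp
  also have "\<dots> = inv\<^bsub>G\<^esub> (word_val G w) \<otimes>\<^bsub>G\<^esub> inv\<^bsub>G\<^esub> (letter_val G l)"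
    using Cons(1)[OF wc] letter_val_neg[OF G l, of "fst l"] lv G
    by (simp add: group.inv_closed[OF G] monoid.r_one[OF group.is_monoid[OF G]])
  also have "\<dots> = inv\<^bsub>G\<^esub> (letter_val G l \<otimes>\<^bsub>G\<^esub> word_val G w)"
    using group.inv_mult_group[OF G lv word_val_carrier[OF G wc]] by simp
  finally show ?case by simp
qed

lemma generate_words:
  assumes G: "group G" and Xs: "Xs \<subseteq> carrier G"
  shows "generate G Xs = {x. \<exists>w. x = word_val G w \<and> snd ` set w \<subseteq> Xs}"
proof
  interpret group G by fact
  show "generate G Xs \<subseteq> {x. \<exists>w. x = word_val G w \<and> snd ` set w \<subseteq> Xs}"
  proof
    fix x assume "x \<in> generate G Xs"
    then show "x \<in> {x. \<exists>w. x = word_val G w \<and> snd ` set w \<subseteq> Xs}"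
    proof induction
      case one then show ?case by (intro CollectI exI[of _ "[]"]) simp
    next
      case (incl h) then show ?case using Xs
        by (intro CollectI exI[of _ "[(True, h)]"]) (auto simp: letter_val_def)
    next
      case (inv h) then show ?case using Xs
        by (intro CollectI exI[of _ "[(False, h)]"]) (auto simp: letter_val_def)
    next
      case (eng h1 h2)
      then obtain w1 w2 where "h1 = word_val G w1" "snd ` set w1 \<subseteq> Xs" "h2 = word_val G w2" "snd ` set w2 \<subseteq> Xs"
        by blast
      then show ?case using Xs word_val_append[OF G, of w1 w2]
        by (intro CollectI exI[of _ "w1 @ w2"]) auto
    qed
  qed
  show "{x. \<exists>w. x = word_val G w \<and> snd ` set w \<subseteq> Xs} \<subseteq> generate G Xs"
  proof clarify
    fix w :: "(bool \<times> 'a) list" assume "snd ` set w \<subseteq> Xs"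
    then show "word_val G w \<in> generate G Xs"
    proof (induction w)
      case Nil then show ?case by (simp add: generate.one)
    next
      case (Cons l w)
      have "letter_val G l \<in> generate G Xs" using Cons(2)
        by (auto simp: letter_val_def intro: generate.incl generate.inv)
      then show ?case using Cons by (auto intro: generate.eng)
    qed
  qed
qed

lemma free_word_one:
  assumes G: "group G" and Q: "group Q" and fb: "free_basis G C" and w: "snd ` set w \<subseteq> C"
    and f: "f ` C \<subseteq> carrier Q" and v: "word_val G w = \<one>\<^bsub>G\<^esub>"
  shows "word_val Q (map (apsnd f) w) = \<one>\<^bsub>Q\<^esub>"
proof -
  obtain r where r: "reduced_word r" "cancel_step\<^sup>*\<^sup>* w r" using reduce_ex by blast
  have Cc: "C \<subseteq> carrier G" using fb by (simp add: free_basis_def)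
  have "word_val G (map (apsnd id) w) = word_val G (map (apsnd id) r)"
    by (rule red_val[OF r(2) G]) (use w Cc in auto)
  then have rv: "word_val G r = \<one>\<^bsub>G\<^esub>" using v by simp
  have "snd ` set r \<subseteq> C" using red_set[OF r(2)] w by auto
  then have "r = []" using fb r(1) rv unfolding free_basis_def by blast
  moreover have "word_val Q (map (apsnd f) w) = word_val Q (map (apsnd f) r)"
    by (rule red_val[OF r(2) Q]) (use w f in auto)
  ultimately show ?thesis by simp
qed

lemma free_wd:
  assumes G: "group G" and Q: "group Q" and fb: "free_basis G C"
    and w1: "snd ` set w1 \<subseteq> C" and w2: "snd ` set w2 \<subseteq> C"
    and f: "f ` C \<subseteq> carrier Q" and v: "word_val G w1 = word_val G w2"
  shows "word_val Q (map (apsnd f) w1) = word_val Q (map (apsnd f) w2)"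
proof -
  have Cc: "C \<subseteq> carrier G" using fb by (simp add: free_basis_def)
  have c1: "word_val G w1 \<in> carrier G" using word_val_carrier[OF G] w1 Cc by blast
  have "word_val G (w1 @ iw w2) = word_val G w1 \<otimes>\<^bsub>G\<^esub> inv\<^bsub>G\<^esub> word_val G w2"
    using word_val_append[OF G, of w1 "iw w2"] word_val_iw[OF G, of w2] w1 w2 Cc by auto
  also have "\<dots> = \<one>\<^bsub>G\<^esub>" using v c1 by (simp add: group.r_inv[OF G])
  finally have "word_val Q (map (apsnd f) (w1 @ iw w2)) = \<one>\<^bsub>Q\<^esub>"
    by (intro free_word_one[OF G Q fb _ f]) (use w1 w2 in \<open>simp add: image_Un\<close>)
  moreover have fw: "f ` snd ` set w1 \<subseteq> carrier Q" "f ` snd ` set w2 \<subseteq> carrier Q" using w1 w2 f by blast+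
  then have q1: "word_val Q (map (apsnd f) w1) \<in> carrier Q" and q2: "word_val Q (map (apsnd f) w2) \<in> carrier Q"
    using word_val_carrier[OF Q, of "map (apsnd f) w1"] word_val_carrier[OF Q, of "map (apsnd f) w2"] by auto
  moreover have "word_val Q (map (apsnd f) (w1 @ iw w2)) = word_val Q (map (apsnd f) w1) \<otimes>\<^bsub>Q\<^esub> inv\<^bsub>Q\<^esub> word_val Q (map (apsnd f) w2)"
    using word_val_append[OF Q, of "map (apsnd f) w1" "iw (map (apsnd f) w2)"]
      word_val_iw[OF Q, of "map (apsnd f) w2"] fw by (simp add: map_apsnd_iw)
  ultimately show ?thesis using Q
    by (metis group.inv_equality group.inv_inv group.inv_closed)
qed

definition homs :: "('a,'b) monoid_scheme \<Rightarrow> 'a set \<Rightarrow> ('c,'d) monoid_scheme \<Rightarrow> ('a \<Rightarrow> 'c) set" where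
  "homs G K Q = {h \<in> K \<rightarrow>\<^sub>E carrier Q. \<forall>x\<in>K. \<forall>y\<in>K. h (x \<otimes>\<^bsub>G\<^esub> y) = h x \<otimes>\<^bsub>Q\<^esub> h y}"

lemma homs_one:
  assumes G: "group G" and Q: "group Q" and K: "subgroup K G" and h: "h \<in> homs G K Q"
  shows "h \<one>\<^bsub>G\<^esub> = \<one>\<^bsub>Q\<^esub>"
proof -
  have o: "\<one>\<^bsub>G\<^esub> \<in> K" using K by (rule subgroup.one_closed)
  have c: "h \<one>\<^bsub>G\<^esub> \<in> carrier Q" using h o unfolding homs_def by auto
  have "h \<one>\<^bsub>G\<^esub> = h (\<one>\<^bsub>G\<^esub> \<otimes>\<^bsub>G\<^esub> \<one>\<^bsub>G\<^esub>)"
    using G by (simp add: group.is_monoid monoid.l_one monoid.one_closed)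
  also have "\<dots> = h \<one>\<^bsub>G\<^esub> \<otimes>\<^bsub>Q\<^esub> h \<one>\<^bsub>G\<^esub>" using h o unfolding homs_def by auto
  finally show ?thesis using group.l_cancel_one'[OF Q c c] by simp
qed

lemma homs_inv:
  assumes G: "group G" and Q: "group Q" and K: "subgroup K G" and h: "h \<in> homs G K Q" and x: "x \<in> K"
  shows "h (inv\<^bsub>G\<^esub> x) = inv\<^bsub>Q\<^esub> (h x)"
proof -
  have ix: "inv\<^bsub>G\<^esub> x \<in> K" using K x by (rule subgroup.m_inv_closed)
  have xc: "x \<in> carrier G" using K x by (rule subgroup.mem_carrier)
  have c1: "h x \<in> carrier Q" and c2: "h (inv\<^bsub>G\<^esub> x) \<in> carrier Q" using h x ix unfolding homs_def by auto
  have "h (inv\<^bsub>G\<^esub> x) \<otimes>\<^bsub>Q\<^esub> h x = h (inv\<^bsub>G\<^esub> x \<otimes>\<^bsub>G\<^esub> x)" using h x ix unfolding homs_def by auto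
  also have "\<dots> = \<one>\<^bsub>Q\<^esub>" using group.l_inv[OF G xc] homs_one[OF G Q K h] by simp
  finally show ?thesis using group.inv_equality[OF Q _ c1 c2] by simp
qed

lemma word_val_subgroup:
  assumes G: "group G" and K: "subgroup K G"
  shows "snd ` set w \<subseteq> K \<Longrightarrow> word_val G w \<in> K"
proof (induction w)
  case Nil then show ?case using K by (simp add: subgroup.one_closed)
next
  case (Cons l w)
  have "letter_val G l \<in> K" using Cons(2) K by (auto simp: letter_val_def subgroup.m_inv_closed)
  then show ?case using Cons K by (simp add: subgroup.m_closed)
qed

lemma homs_word:
  assumes G: "group G" and Q: "group Q" and K: "subgroup K G" and h: "h \<in> homs G K Q"
  shows "snd ` set w \<subseteq> K \<Longrightarrow> h (word_val G w) = word_val Q (map (apsnd h) w)"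
proof (induction w)
  case Nil then show ?case using homs_one[OF G Q K h] by simp
next
  case (Cons l w)
  have l: "snd l \<in> K" and wK: "snd ` set w \<subseteq> K" using Cons(2) by auto
  have lK: "letter_val G l \<in> K" using l K by (auto simp: letter_val_def subgroup.m_inv_closed)
  have "h (word_val G (l # w)) = h (letter_val G l) \<otimes>\<^bsub>Q\<^esub> h (word_val G w)"
    using h lK word_val_subgroup[OF G K wK] unfolding homs_def by auto
  moreover have "h (letter_val G l) = letter_val Q (apsnd h l)"
    using homs_inv[OF G Q K h l] by (auto simp: letter_val_def apsnd_eq)
  ultimately show ?case using Cons(1)[OF wK] by simp
qed

lemma homs_unique:
  assumes G: "group G" and Q: "group Q" and S: "S \<subseteq> carrier G"
    and h1: "h1 \<in> homs G (generate G S) Q" and h2: "h2 \<in> homs G (generate G S) Q"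
    and eq: "\<forall>s\<in>S. h1 s = h2 s"
  shows "h1 = h2"
proof (rule PiE_ext)
  let ?K = "generate G S"
  have K: "subgroup ?K G" using group.generate_is_subgroup[OF G S] .
  show "h1 \<in> ?K \<rightarrow>\<^sub>E carrier Q" "h2 \<in> ?K \<rightarrow>\<^sub>E carrier Q" using h1 h2 unfolding homs_def by auto
  fix x assume "x \<in> ?K"
  then obtain w where w: "x = word_val G w" "snd ` set w \<subseteq> S" using generate_words[OF G S] by auto
  have SK: "S \<subseteq> ?K" by (auto intro: generate.incl)
  have meq: "map (apsnd h1) w = map (apsnd h2) w" using w(2) eq by (auto simp: apsnd_eq)
  have e1: "h1 x = word_val Q (map (apsnd h1) w)" using homs_word[OF G Q K h1, of w] w SK by auto
  have e2: "h2 x = word_val Q (map (apsnd h2) w)" using homs_word[OF G Q K h2, of w] w SK by auto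
  show "h1 x = h2 x" by (simp only: e1 e2 meq)
qed

lemma count_main:
  assumes G: "group G" and Q: "group Q" and fQ: "finite (carrier Q)"
    and fb: "free_basis G C" and fC: "finite C" and fS: "finite S" and S: "S \<subseteq> carrier G"
    and gen: "generate G C = generate G S"
  shows "finite (homs G (generate G S) Q)"
    "card (carrier Q) ^ card C \<le> card (homs G (generate G S) Q)"
    "inj_on (\<lambda>h. restrict h S) (homs G (generate G S) Q)"
    "(\<lambda>h. restrict h S) ` homs G (generate G S) Q \<subseteq> S \<rightarrow>\<^sub>E carrier Q"
proof -
  define K where "K = generate G S"
  have Cc: "C \<subseteq> carrier G" using fb by (simp add: free_basis_def)
  have K: "subgroup K G" unfolding K_def using group.generate_is_subgroup[OF G S] .
  have KC: "K = {x. \<exists>w. x = word_val G w \<and> snd ` set w \<subseteq> C}"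
    unfolding K_def gen[symmetric] using generate_words[OF G Cc] .
  define rep where "rep x = (SOME w. snd ` set w \<subseteq> C \<and> word_val G w = x)" for x
  have rep: "snd ` set (rep x) \<subseteq> C \<and> word_val G (rep x) = x" if "x \<in> K" for x
  proof -
    from that obtain w where "snd ` set w \<subseteq> C \<and> word_val G w = x" unfolding KC by auto
    then show ?thesis unfolding rep_def by (rule someI)
  qed
  define \<Phi> where "\<Phi> f = restrict (\<lambda>x. word_val Q (map (apsnd f) (rep x))) K" for f
  have CK: "C \<subseteq> K" unfolding K_def gen[symmetric] by (auto intro: generate.incl)
  have \<Phi>c: "\<Phi> f c = f c" if f: "f \<in> C \<rightarrow>\<^sub>E carrier Q" and c: "c \<in> C" for f c
  proof -
    have fC': "f ` C \<subseteq> carrier Q" using f by auto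
    have cc: "c \<in> carrier G" using c Cc by auto
    have "word_val Q (map (apsnd f) (rep c)) = word_val Q (map (apsnd f) [(True, c)])"
      by (rule free_wd[OF G Q fb _ _ fC']) (use rep[of c] c CK cc G in \<open>auto simp: letter_val_def group.is_monoid monoid.r_one\<close>)
    also have "\<dots> = f c" using fC' c Q by (auto simp: letter_val_def apsnd_eq group.is_monoid monoid.r_one)
    finally show ?thesis using c CK unfolding \<Phi>_def by auto
  qed
  have \<Phi>hom: "\<Phi> f \<in> homs G K Q" if f: "f \<in> C \<rightarrow>\<^sub>E carrier Q" for f
  proof -
    have fC': "f ` C \<subseteq> carrier Q" using f by auto
    have car: "word_val Q (map (apsnd f) (rep x)) \<in> carrier Q" if "x \<in> K" for x
    proof -
      have "f ` snd ` set (rep x) \<subseteq> carrier Q" using rep[OF that] fC' by blast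
      then show ?thesis using word_val_carrier[OF Q, of "map (apsnd f) (rep x)"] by simp
    qed
    have mul: "\<Phi> f (x \<otimes>\<^bsub>G\<^esub> y) = \<Phi> f x \<otimes>\<^bsub>Q\<^esub> \<Phi> f y" if x: "x \<in> K" and y: "y \<in> K" for x y
    proof -
      have xy: "x \<otimes>\<^bsub>G\<^esub> y \<in> K" using K x y by (rule subgroup.m_closed)
      have rx: "snd ` set (rep x) \<subseteq> C" "word_val G (rep x) = x" using rep[OF x] by auto
      have ry: "snd ` set (rep y) \<subseteq> C" "word_val G (rep y) = y" using rep[OF y] by auto
      have rxy: "snd ` set (rep (x \<otimes>\<^bsub>G\<^esub> y)) \<subseteq> C" "word_val G (rep (x \<otimes>\<^bsub>G\<^esub> y)) = x \<otimes>\<^bsub>G\<^esub> y" using rep[OF xy] by auto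
      have "word_val G (rep x @ rep y) = x \<otimes>\<^bsub>G\<^esub> y"
        using word_val_append[OF G, of "rep x" "rep y"] rx ry Cc by auto
      then have "word_val Q (map (apsnd f) (rep (x \<otimes>\<^bsub>G\<^esub> y))) = word_val Q (map (apsnd f) (rep x @ rep y))"
        by (intro free_wd[OF G Q fb _ _ fC']) (use rxy rx ry in \<open>auto simp: image_Un\<close>)
      also have "\<dots> = word_val Q (map (apsnd f) (rep x)) \<otimes>\<^bsub>Q\<^esub> word_val Q (map (apsnd f) (rep y))"
      proof -
        have "f ` snd ` set (rep x) \<subseteq> carrier Q" "f ` snd ` set (rep y) \<subseteq> carrier Q" using rx ry fC' by blast+
        then show ?thesis using word_val_append[OF Q, of "map (apsnd f) (rep x)" "map (apsnd f) (rep y)"] by simp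
      qed
      finally show ?thesis unfolding \<Phi>_def using x y xy by simp
    qed
    show ?thesis unfolding homs_def using car mul by (auto simp: \<Phi>_def)
  qed
  have \<Phi>inj: "inj_on \<Phi> (C \<rightarrow>\<^sub>E carrier Q)"
  proof (rule inj_onI)
    fix f1 f2 assume f: "f1 \<in> C \<rightarrow>\<^sub>E carrier Q" "f2 \<in> C \<rightarrow>\<^sub>E carrier Q" "\<Phi> f1 = \<Phi> f2"
    show "f1 = f2"
      by (rule PiE_ext[OF f(1) f(2)]) (metis \<Phi>c f)
  qed
  define \<Psi> where "\<Psi> h = restrict h S" for h :: "'a \<Rightarrow> 'c"
  have SK: "S \<subseteq> K" unfolding K_def by (auto intro: generate.incl)
  have \<Psi>inj: "inj_on \<Psi> (homs G K Q)"
  proof (rule inj_onI)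
    fix h1 h2 assume h: "h1 \<in> homs G K Q" "h2 \<in> homs G K Q" "\<Psi> h1 = \<Psi> h2"
    have "\<forall>s\<in>S. h1 s = h2 s" using h(3) unfolding \<Psi>_def by (metis restrict_apply')
    then show "h1 = h2" using homs_unique[OF G Q S, of h1 h2] h(1,2) unfolding K_def by blast
  qed
  have \<Psi>img: "\<Psi> ` homs G K Q \<subseteq> S \<rightarrow>\<^sub>E carrier Q"
    using SK unfolding \<Psi>_def homs_def by auto
  have T: "finite (S \<rightarrow>\<^sub>E carrier Q)" by (rule finite_PiE[OF fS]) (rule fQ)
  have fin: "finite (homs G K Q)"
    by (rule inj_on_finite[OF \<Psi>inj \<Psi>img T])
  have "card (C \<rightarrow>\<^sub>E carrier Q) \<le> card (homs G K Q)"
    using card_inj_on_le[OF \<Phi>inj _ fin] \<Phi>hom by blast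
  moreover have "card (C \<rightarrow>\<^sub>E carrier Q) = card (carrier Q) ^ card C"
    using card_PiE[OF fC, of "\<lambda>_. carrier Q"] by simp
  ultimately show "card (carrier Q) ^ card C \<le> card (homs G (generate G S) Q)" unfolding K_def by simp
  show "finite (homs G (generate G S) Q)" using fin unfolding K_def .
  show "inj_on (\<lambda>h. restrict h S) (homs G (generate G S) Q)" using \<Psi>inj unfolding K_def \<Psi>_def .
  show "(\<lambda>h. restrict h S) ` homs G (generate G S) Q \<subseteq> S \<rightarrow>\<^sub>E carrier Q" using \<Psi>img unfolding K_def \<Psi>_def .
qed

lemma rank_le_gens:
  assumes G: "group G" and fb: "free_basis G C" and fC: "finite C" and fS: "finite S" and S: "S \<subseteq> carrier G"
    and gen: "generate G C = generate G S"
  shows "card C \<le> card S"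
proof -
  let ?Q = "sym_group 2"
  have Q: "group ?Q" by (rule sym_group_is_group)
  have cQ: "card (carrier ?Q) = 2" by (simp add: sym_group_card_carrier)
  then have fQ: "finite (carrier ?Q)" by (intro card_ge_0_finite) simp
  note cm = count_main[OF G Q fQ fb fC fS S gen]
  have "card (homs G (generate G S) ?Q) \<le> card (S \<rightarrow>\<^sub>E carrier ?Q)"
    by (rule card_inj_on_le[OF cm(3) cm(4)]) (rule finite_PiE[OF fS], rule fQ)
  also have "\<dots> = card (carrier ?Q) ^ card S" using card_PiE[OF fS, of "\<lambda>_. carrier ?Q"] by simp
  finally have "(2::nat) ^ card C \<le> 2 ^ card S" using cm(2) cQ by (metis order_trans)
  then show ?thesis by (simp add: power_le_imp_le_exp)
qed

lemma extend_all:
  assumes G: "group G" and Q: "group Q" and fQ: "finite (carrier Q)"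
    and fb: "free_basis G C" and fC: "finite C" and fS: "finite S" and S: "S \<subseteq> carrier G"
    and gen: "generate G C = generate G S" and cd: "card C = card S"
    and f: "f \<in> S \<rightarrow>\<^sub>E carrier Q"
  shows "\<exists>h \<in> homs G (generate G S) Q. \<forall>s\<in>S. h s = f s"
proof -
  note cm = count_main[OF G Q fQ fb fC fS S gen]
  let ?H = "homs G (generate G S) Q"
  have T: "finite (S \<rightarrow>\<^sub>E carrier Q)" by (rule finite_PiE[OF fS]) (rule fQ)
  have "card (S \<rightarrow>\<^sub>E carrier Q) = card (carrier Q) ^ card S" using card_PiE[OF fS, of "\<lambda>_. carrier Q"] by simp
  also have "\<dots> \<le> card ?H" using cm(2) cd by simp
  also have "\<dots> = card ((\<lambda>h. restrict h S) ` ?H)" using card_image[OF cm(3)] by simp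
  finally have "(\<lambda>h. restrict h S) ` ?H = S \<rightarrow>\<^sub>E carrier Q" using card_seteq[OF T cm(4)] by simp
  then obtain h where h: "h \<in> ?H" "restrict h S = f" using f by (metis imageE)
  then show ?thesis by (metis restrict_apply')
qed

lemma reduced_nth:
  "reduced_word w \<Longrightarrow> Suc j < length w \<Longrightarrow> snd (w ! j) = snd (w ! Suc j) \<Longrightarrow> fst (w ! j) = fst (w ! Suc j)"
proof (induction w arbitrary: j rule: reduced_word.induct)
  case (3 l1 l2 w)
  show ?case
  proof (cases j)
    case 0 then show ?thesis using 3 by simp
  next
    case (Suc i) then show ?thesis using 3 by simp
  qed
qed auto

lemma perm_extend:
  assumes A: "finite A" and D: "D \<subseteq> A" and gD: "g ` D \<subseteq> A" and inj: "inj_on g D"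
  shows "\<exists>p. p permutes A \<and> (\<forall>x\<in>D. p x = g x)"
proof -
  have fD: "finite D" using A D by (rule finite_subset[rotated])
  have "card (A - D) = card (A - g ` D)"
    using card_Diff_subset[OF fD D] card_Diff_subset[OF finite_imageI[OF fD] gD] card_image[OF inj] by simp
  then obtain h where h: "bij_betw h (A - D) (A - g ` D)"
    using finite_same_card_bij[of "A - D" "A - g ` D"] A by auto
  define p where "p x = (if x \<in> D then g x else if x \<in> A then h x else x)" for x
  have img: "p ` A \<subseteq> A" using gD h unfolding p_def bij_betw_def by auto
  have injp: "inj_on p A"
  proof (rule inj_onI)
    fix x y assume xy: "x \<in> A" "y \<in> A" "p x = p y"
    show "x = y"
    proof (cases "x \<in> D"; cases "y \<in> D")
      assume "x \<in> D" "y \<in> D" then show ?thesis using xy inj unfolding p_def by (auto dest: inj_onD)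
    next
      assume "x \<notin> D" "y \<notin> D" then show ?thesis using xy h unfolding p_def bij_betw_def by (auto dest: inj_onD)
    next
      assume "x \<in> D" "y \<notin> D"
      then have "p x \<in> g ` D" "p y \<in> A - g ` D" using xy h unfolding p_def bij_betw_def by auto
      then show ?thesis using xy by auto
    next
      assume "x \<notin> D" "y \<in> D"
      then have "p y \<in> g ` D" "p x \<in> A - g ` D" using xy h unfolding p_def bij_betw_def by auto
      then show ?thesis using xy by auto
    qed
  qed
  have "p ` A = A" by (rule endo_inj_surj[OF A img injp])
  then have "bij_betw p A A" using injp unfolding bij_betw_def by simp
  moreover have "\<And>x. x \<notin> A \<Longrightarrow> p x = x" using D unfolding p_def by auto
  ultimately have "p permutes A" by (rule bij_imp_permutes)
  then show ?thesis unfolding p_def by auto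
qed

lemma resid:
  assumes red: "reduced_word w" and ne: "w \<noteq> []"
  shows "\<exists>n f. (\<forall>x. f x \<in> carrier (sym_group n)) \<and>
    word_val (sym_group n) (map (apsnd f) w) \<noteq> \<one>\<^bsub>sym_group n\<^esub>"
proof -
  define L where "L = length w"
  define A where "A = {1..L+1}"
  define T where "T x = {j. j < L \<and> w ! j = (True, x)}" for x
  define F where "F x = {j. j < L \<and> w ! j = (False, x)}" for x
  define D where "D x = (\<lambda>j. j + 2) ` T x \<union> (\<lambda>j. j + 1) ` F x" for x
  define g where "g x y = (if y \<in> (\<lambda>j. j + 2) ` T x then y - 1 else y + 1)" for x y
  have disj: "a \<noteq> Suc b" if "a \<in> F x" "b \<in> T x" for a b x
  proof
    assume "a = Suc b"
    then have "Suc b < length w" "snd (w ! b) = snd (w ! Suc b)" "fst (w ! b) \<noteq> fst (w ! Suc b)"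
      using that unfolding T_def F_def L_def by auto
    then show False using reduced_nth[OF red] by blast
  qed
  have disj2: "b \<noteq> Suc a" if "a \<in> F x" "b \<in> T x" for a b x
  proof
    assume "b = Suc a"
    then have "Suc a < length w" "snd (w ! a) = snd (w ! Suc a)" "fst (w ! a) \<noteq> fst (w ! Suc a)"
      using that unfolding T_def F_def L_def by auto
    then show False using reduced_nth[OF red] by blast
  qed
  have ext: "\<exists>p. p permutes A \<and> (\<forall>y\<in>D x. p y = g x y)" for x
  proof (rule perm_extend)
    show "finite A" unfolding A_def by simp
    show "D x \<subseteq> A" unfolding D_def A_def T_def F_def by auto
    show "g x ` D x \<subseteq> A" unfolding D_def A_def T_def F_def g_def by auto
    show "inj_on (g x) (D x)"
    proof (rule inj_onI)
      fix y1 y2 assume y: "y1 \<in> D x" "y2 \<in> D x" "g x y1 = g x y2"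
      show "y1 = y2"
      proof (cases "y1 \<in> (\<lambda>j. j + 2) ` T x"; cases "y2 \<in> (\<lambda>j. j + 2) ` T x")
        assume "y1 \<in> (\<lambda>j. j + 2) ` T x" "y2 \<in> (\<lambda>j. j + 2) ` T x"
        then show ?thesis using y unfolding g_def by auto
      next
        assume "y1 \<notin> (\<lambda>j. j + 2) ` T x" "y2 \<notin> (\<lambda>j. j + 2) ` T x"
        then show ?thesis using y unfolding g_def by auto
      next
        assume a: "y1 \<in> (\<lambda>j. j + 2) ` T x" "y2 \<notin> (\<lambda>j. j + 2) ` T x"
        then obtain b a' where "b \<in> T x" "y1 = b + 2" "a' \<in> F x" "y2 = a' + 1" using y(2) unfolding D_def by auto
        then show ?thesis using y(3) a disj[of a' x b] disj2[of a' x b] unfolding g_def by auto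
      next
        assume a: "y1 \<notin> (\<lambda>j. j + 2) ` T x" "y2 \<in> (\<lambda>j. j + 2) ` T x"
        then obtain b a' where "b \<in> T x" "y2 = b + 2" "a' \<in> F x" "y1 = a' + 1" using y(1) unfolding D_def by auto
        then show ?thesis using y(3) a disj[of a' x b] disj2[of a' x b] unfolding g_def by auto
      qed
    qed
  qed
  define f where "f x = (SOME p. p permutes A \<and> (\<forall>y\<in>D x. p y = g x y))" for x
  have f: "f x permutes A" "\<And>y. y \<in> D x \<Longrightarrow> f x y = g x y" for x
    using someI_ex[OF ext[of x]] unfolding f_def by auto
  let ?Q = "sym_group (L + 1)"
  have fc: "f x \<in> carrier ?Q" for x using f(1) unfolding A_def by (simp add: sym_group_carrier)
  have step: "letter_val ?Q (apsnd f (w ! j)) (j + 2) = j + 1" if j: "j < L" for j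
  proof (cases "w ! j")
    case (Pair s x)
    show ?thesis
    proof (cases s)
      case True
      then have "j \<in> T x" using j Pair unfolding T_def by auto
      then have "j + 2 \<in> D x" "g x (j + 2) = j + 1" unfolding D_def g_def by auto
      then show ?thesis using True Pair f(2) by (simp add: letter_val_def)
    next
      case False
      then have jF: "j \<in> F x" using j Pair unfolding F_def by auto
      then have "j + 1 \<in> D x" unfolding D_def by auto
      moreover have "j + 1 \<notin> (\<lambda>j. j + 2) ` T x" using disj[OF jF] by auto
      ultimately have fx: "f x (j + 1) = j + 2" using f(2) unfolding g_def by auto
      have "inv' (f x) (f x (j + 1)) = j + 1" using permutes_inverses(2)[OF f(1)] by simp
      then show ?thesis using False Pair fx fc[of x] by (simp add: letter_val_def)
    qed
  qed
  have main: "word_val ?Q (map (apsnd f) (drop k w)) (L + 1) = k + 1" if "k \<le> L" for k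
    using that
  proof (induction "L - k" arbitrary: k)
    case 0
    then have "k = L" by simp
    then show ?case by (simp add: L_def sym_group_one)
  next
    case (Suc d)
    then have k: "k < L" by simp
    have dr: "drop k w = w ! k # drop (Suc k) w" using k Cons_nth_drop_Suc[of k w] unfolding L_def by simp
    have ih: "word_val ?Q (map (apsnd f) (drop (Suc k) w)) (L + 1) = k + 2"
      using Suc(1)[of "Suc k"] Suc(2) k by simp
    show ?case using ih step[OF k] unfolding dr by (simp add: sym_group_mult)
  qed
  have "word_val ?Q (map (apsnd f) w) (L + 1) = 1" using main[of 0] by simp
  moreover have "L \<noteq> 0" using ne unfolding L_def by simp
  ultimately have "word_val ?Q (map (apsnd f) w) \<noteq> \<one>\<^bsub>?Q\<^esub>" by (auto simp: sym_group_one)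
  then show ?thesis using fc by blast
qed

lemma hopf:
  assumes G: "group G" and fb: "free_basis G C" and fC: "finite C" and fS: "finite S"
    and S: "S \<subseteq> carrier G" and gen: "generate G C = generate G S" and cd: "card C = card S"
  shows "free_basis G S"
  unfolding free_basis_def
proof (intro conjI S allI impI)
  fix w :: "(bool \<times> 'a) list" assume w: "w \<noteq> [] \<and> reduced_word w \<and> snd ` set w \<subseteq> S"
  obtain n f where f: "\<forall>x. f x \<in> carrier (sym_group n)"
      "word_val (sym_group n) (map (apsnd f) w) \<noteq> \<one>\<^bsub>sym_group n\<^esub>"
    using resid[of w] w by blast
  let ?Q = "sym_group n"
  have Q: "group ?Q" by (rule sym_group_is_group)
  have fQ: "finite (carrier ?Q)" using sym_group_card_carrier[of n] by (intro card_ge_0_finite) simp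
  have "restrict f S \<in> S \<rightarrow>\<^sub>E carrier ?Q" using f(1) by auto
  then obtain h where h: "h \<in> homs G (generate G S) ?Q" "\<forall>s\<in>S. h s = restrict f S s"
    using extend_all[OF G Q fQ fb fC fS S gen cd] by blast
  have K: "subgroup (generate G S) G" by (rule group.generate_is_subgroup[OF G S])
  have SK: "S \<subseteq> generate G S" by (auto intro: generate.incl)
  have "h (word_val G w) = word_val ?Q (map (apsnd h) w)" using homs_word[OF G Q K h(1)] w SK by auto
  also have "map (apsnd h) w = map (apsnd f) w" using h(2) w by (auto simp: apsnd_eq)
  finally have hw: "h (word_val G w) \<noteq> \<one>\<^bsub>?Q\<^esub>" using f(2) by simp
  show "word_val G w \<noteq> \<one>\<^bsub>G\<^esub>"
  proof
    assume "word_val G w = \<one>\<^bsub>G\<^esub>"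
    then show False using hw homs_one[OF G Q K h(1)] by simp
  qed
qed

lemma rank_upper: "rank_lf G M = r \<Longrightarrow> fin_gen_subgroup G H \<Longrightarrow> H \<subseteq> M \<Longrightarrow> enat (mu_in G M H) \<le> r"
  unfolding rank_lf_def by (auto intro: Sup_upper)

lemma rank_least: "(\<And>H. fin_gen_subgroup G H \<Longrightarrow> H \<subseteq> M \<Longrightarrow> mu_in G M H \<le> k) \<Longrightarrow> rank_lf G M \<le> enat k"
  unfolding rank_lf_def by (auto intro!: Sup_least)

lemma rank_gt: "enat m < rank_lf G M \<Longrightarrow> \<exists>H. fin_gen_subgroup G H \<and> H \<subseteq> M \<and> m < mu_in G M H"
  unfolding rank_lf_def less_Sup_iff by auto

lemma mu_le: "0 < k \<Longrightarrow> F \<subseteq> M \<Longrightarrow> free_subgroup_rank G F k \<Longrightarrow> H \<subseteq> F \<Longrightarrow> mu_in G M H \<le> k"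
  unfolding mu_in_def by (rule Least_le) blast

lemma mu_prop:
  assumes "0 < k" "F \<subseteq> M" "free_subgroup_rank G F k" "H \<subseteq> F"
  shows "0 < mu_in G M H \<and> (\<exists>F. F \<subseteq> M \<and> free_subgroup_rank G F (mu_in G M H) \<and> H \<subseteq> F)"
proof -
  have "\<exists>m. 0 < m \<and> (\<exists>F. F \<subseteq> M \<and> free_subgroup_rank G F m \<and> H \<subseteq> F)" using assms by blast
  then show ?thesis unfolding mu_in_def by (rule LeastI_ex)
qed

lemma gen_empty: "group G \<Longrightarrow> generate G {} = {\<one>\<^bsub>G\<^esub>}"
  using generate_words[of G "{}"] by auto

lemma lf_basis:
  assumes "locally_free G" "fin_gen_subgroup G H"
  shows "\<exists>C. finite C \<and> free_basis G C \<and> generate G C = H"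
  using assms unfolding locally_free_def free_subgroup_rank_def by blast

lemma basis_pos:
  assumes G: "group G" and "generate G C = LL" "x \<in> LL" "x \<noteq> \<one>\<^bsub>G\<^esub>" "finite C"
  shows "0 < card C"
proof (rule ccontr)
  assume "\<not> 0 < card C"
  then have "C = {}" using assms(5) by simp
  then show False using assms gen_empty[OF G] by auto
qed

lemma rep_reduced:
  assumes G: "group G" and Xs: "Xs \<subseteq> carrier G" and x: "x \<in> generate G Xs" "x \<noteq> \<one>\<^bsub>G\<^esub>"
  shows "\<exists>u. u \<noteq> [] \<and> reduced_word u \<and> snd ` set u \<subseteq> Xs \<and> word_val G u = x"
proof -
  obtain w where w: "x = word_val G w" "snd ` set w \<subseteq> Xs" using x generate_words[OF G Xs] by auto
  obtain r where r: "reduced_word r" "cancel_step\<^sup>*\<^sup>* w r" using reduce_ex by blast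
  have "word_val G (map (apsnd id) w) = word_val G (map (apsnd id) r)"
    by (rule red_val[OF r(2) G]) (use w Xs in auto)
  then have v: "word_val G r = x" using w by simp
  have "snd ` set r \<subseteq> Xs" using red_set[OF r(2)] w by auto
  moreover have "r \<noteq> []" using v x(2) by auto
  ultimately show ?thesis using r v by blast
qed

lemma reduced_Cons_iff:
  "reduced_word (l # v) \<longleftrightarrow> reduced_word v \<and> (v \<noteq> [] \<longrightarrow> \<not> (snd l = snd (hd v) \<and> fst l \<noteq> fst (hd v)))"
  by (cases v) auto

lemma reduced_append:
  "reduced_word u \<Longrightarrow> reduced_word v \<Longrightarrow> u \<noteq> [] \<Longrightarrow> v \<noteq> [] \<Longrightarrow> snd (last u) \<noteq> snd (hd v) \<Longrightarrow> reduced_word (u @ v)"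
proof (induction u)
  case (Cons l u)
  show ?case
  proof (cases "u = []")
    case True then show ?thesis using Cons by (simp add: reduced_Cons_iff)
  next
    case False
    have "reduced_word u" using Cons(2) by (simp add: reduced_Cons_iff)
    then have "reduced_word (u @ v)" using Cons False by simp
    then show ?thesis using Cons(2) False by (simp add: reduced_Cons_iff)
  qed
qed simp

lemma free_product_from_basis:
  assumes G: "group G" and fb: "free_basis G (insert g B)" and gB: "g \<notin> B"
  shows "internal_free_product G (generate G B) (generate G {g})"
proof -
  have Bc: "B \<subseteq> carrier G" and gc: "g \<in> carrier G" using fb by (auto simp: free_basis_def)
  have s1: "subgroup (generate G B) G" by (rule group.generate_is_subgroup[OF G Bc])
  have s2: "subgroup (generate G {g}) G" using group.generate_is_subgroup[OF G] gc by auto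
  have blk: "\<exists>u. u \<noteq> [] \<and> reduced_word u \<and> snd ` set u \<subseteq> (if s then B else {g}) \<and> word_val G u = y"
    if "y \<noteq> \<one>\<^bsub>G\<^esub>" "if s then y \<in> generate G B else y \<in> generate G {g}" for s y
    using rep_reduced[OF G, of "if s then B else {g}" y] that Bc gc by (cases s) auto
  have ind: "w \<noteq> [] \<Longrightarrow> alternating w \<Longrightarrow>
      (\<forall>l\<in>set w. snd l \<noteq> \<one>\<^bsub>G\<^esub> \<and> (if fst l then snd l \<in> generate G B else snd l \<in> generate G {g})) \<Longrightarrow>
      \<exists>W. W \<noteq> [] \<and> reduced_word W \<and> snd ` set W \<subseteq> insert g B \<and>
        word_val G W = foldr (\<lambda>l x. snd l \<otimes>\<^bsub>G\<^esub> x) w \<one>\<^bsub>G\<^esub> \<and> (snd (hd W) \<in> B \<longleftrightarrow> fst (hd w))" for w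
  proof (induction w)
    case Nil then show ?case by simp
  next
    case (Cons l rest)
    have l: "snd l \<noteq> \<one>\<^bsub>G\<^esub>" "if fst l then snd l \<in> generate G B else snd l \<in> generate G {g}" using Cons(4) by auto
    obtain u where u: "u \<noteq> []" "reduced_word u" "snd ` set u \<subseteq> (if fst l then B else {g})" "word_val G u = snd l"
      using blk[OF l] by blast
    have uB: "snd x \<in> B \<longleftrightarrow> fst l" if "x \<in> set u" for x using u(3) that gB by (cases "fst l") auto
    have uc: "snd ` set u \<subseteq> insert g B" using u(3) by (auto split: if_splits)
    have lc: "snd l \<in> carrier G" using u(4) word_val_carrier[OF G, of u] uc Bc gc by auto
    show ?case
    proof (cases "rest = []")
      case True
      then show ?thesis using u uc uB[of "hd u"] lc G by (auto simp: group.is_monoid monoid.r_one)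
    next
      case False
      have alt: "alternating rest" "fst l \<noteq> fst (hd rest)" using Cons(3) False by (cases rest; simp)+
      obtain W where W: "W \<noteq> []" "reduced_word W" "snd ` set W \<subseteq> insert g B"
          "word_val G W = foldr (\<lambda>l x. snd l \<otimes>\<^bsub>G\<^esub> x) rest \<one>\<^bsub>G\<^esub>" "snd (hd W) \<in> B \<longleftrightarrow> fst (hd rest)"
        using Cons(1)[OF False alt(1)] Cons(4) by auto
      have "snd (last u) \<in> B \<longleftrightarrow> fst l" using uB[of "last u"] u(1) by simp
      then have junc: "snd (last u) \<noteq> snd (hd W)" using W(5) alt(2) by auto
      have "word_val G (u @ W) = snd l \<otimes>\<^bsub>G\<^esub> word_val G W"
        using word_val_append[OF G, of u W] uc W(3) Bc gc u(4) by auto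
      then show ?thesis using reduced_append[OF u(2) W(2) u(1) W(1) junc] u(1) uc W uB[of "hd u"]
        by (intro exI[of _ "u @ W"]) auto
    qed
  qed
  show ?thesis unfolding internal_free_product_def
  proof (intro conjI s1 s2 allI impI)
    fix w :: "(bool \<times> 'a) list"
    assume w: "w \<noteq> [] \<and> alternating w \<and>
      (\<forall>l\<in>set w. snd l \<noteq> \<one>\<^bsub>G\<^esub> \<and> (if fst l then snd l \<in> generate G B else snd l \<in> generate G {g}))"
    then obtain W where "W \<noteq> []" "reduced_word W" "snd ` set W \<subseteq> insert g B"
        "word_val G W = foldr (\<lambda>l x. snd l \<otimes>\<^bsub>G\<^esub> x) w \<one>\<^bsub>G\<^esub>"
      using ind by blast
    then show "foldr (\<lambda>l x. snd l \<otimes>\<^bsub>G\<^esub> x) w \<one>\<^bsub>G\<^esub> \<noteq> \<one>\<^bsub>G\<^esub>" using fb unfolding free_basis_def by auto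
  qed
qed

theorem lemma2p1:
  fixes G :: "('a, 'b) monoid_scheme" and D M :: "'a set" and g :: 'a and m :: nat
  assumes "locally_free G"
    and "fin_gen_subgroup G D"
    and "mu_in G (carrier G) D = m"
    and "subgroup M G"
    and "D \<subseteq> M"
    and "rank_lf G M = enat m"
    and "g \<in> carrier G - M"
    and "rank_lf G (generate G (M \<union> {g})) > enat m"
  shows "rank_lf G (generate G (M \<union> {g})) = enat (m + 1) \<and>
         (\<exists>F. F \<subseteq> M \<and> free_subgroup_rank G F m \<and> D \<subseteq> F \<and>
              internal_free_product G F (generate G {g}))"
proof -
  have G: "group G" using assms(1) by (simp add: locally_free_def)
  have Mc: "M \<subseteq> carrier G" using assms(4) by (rule subgroup.subset)
  have gc: "g \<in> carrier G" and gM: "g \<notin> M" using assms(7) by auto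
  have oneM: "\<one>\<^bsub>G\<^esub> \<in> M" using assms(4) by (rule subgroup.one_closed)
  have g1: "g \<noteq> \<one>\<^bsub>G\<^esub>" using gM oneM by auto
  define N where "N = generate G (M \<union> {g})"
  have a8: "enat m < rank_lf G N" using assms(8) unfolding N_def .
  have MgC: "M \<union> {g} \<subseteq> carrier G" using Mc gc by auto
  have Nsub: "subgroup N G" unfolding N_def by (rule group.generate_is_subgroup[OF G MgC])
  have MN: "M \<subseteq> N" and gN: "g \<in> N" unfolding N_def by (auto intro: generate.incl)
  define Pg where "Pg = generate G {g}"
  have Pgfg: "fin_gen_subgroup G Pg" unfolding fin_gen_subgroup_def Pg_def using gc by auto
  obtain Cg where Cg: "finite Cg" "free_basis G Cg" "generate G Cg = Pg"
    using lf_basis[OF assms(1) Pgfg] by blast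
  have gPg: "g \<in> Pg" unfolding Pg_def by (auto intro: generate.incl)
  have cg_pos: "0 < card Cg" by (rule basis_pos[OF G Cg(3) gPg g1 Cg(1)])
  have cg_le: "card Cg \<le> 1" using rank_le_gens[OF G Cg(2) Cg(1), of "{g}"] gc Cg(3) unfolding Pg_def by auto
  have Pg_rank: "free_subgroup_rank G Pg 1"
    unfolding free_subgroup_rank_def using Cg cg_pos cg_le by (intro exI[of _ Cg]) auto
  have Pgsub: "subgroup Pg G" unfolding Pg_def using group.generate_is_subgroup[OF G] gc by auto
  have Pgc: "Pg \<subseteq> carrier G" using Pgsub by (rule subgroup.subset)
  have PgN: "Pg \<subseteq> N" unfolding Pg_def N_def using group.mono_generate[OF G, of "{g}" "M \<union> {g}"] by auto
  show ?thesis
  proof (cases "M \<subseteq> {\<one>\<^bsub>G\<^esub>}")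
    case True
    have onePg: "\<one>\<^bsub>G\<^esub> \<in> Pg" using Pgsub by (rule subgroup.one_closed)
    have NPg: "N \<subseteq> Pg" unfolding N_def
      by (rule group.generate_subgroup_incl[OF G _ Pgsub]) (use True onePg gPg in auto)
    have DPg: "D \<subseteq> Pg" using assms(5) True onePg by auto
    have m1: "1 \<le> m" using mu_prop[of 1 Pg "carrier G" G D] Pg_rank Pgc DPg assms(3) by auto
    have "rank_lf G N \<le> enat 1"
    proof (rule rank_least)
      fix H assume "fin_gen_subgroup G H" "H \<subseteq> N"
      then show "mu_in G N H \<le> 1" using mu_le[of 1 Pg N G H] PgN Pg_rank NPg by auto
    qed
    then have False using a8 m1 by (metis enat_ord_simps(1) enat_ord_simps(2) leD order_less_le_trans)
    then show ?thesis ..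
  next
    case False
    then obtain a where a: "a \<in> M" "a \<noteq> \<one>\<^bsub>G\<^esub>" by blast
    obtain D0 where D0: "finite D0" "D0 \<subseteq> carrier G" "D = generate G D0"
      using assms(2) unfolding fin_gen_subgroup_def by blast
    have D0M: "D0 \<subseteq> M" using assms(5) D0(3) by (auto intro: generate.incl)
    have cover: "\<exists>B. finite B \<and> card B = m \<and> free_basis G B \<and> generate G B \<subseteq> M \<and> D \<subseteq> generate G B
        \<and> H \<subseteq> generate G (insert g B)"
      if H: "fin_gen_subgroup G H" "H \<subseteq> N" for H
    proof -
      obtain T where T: "finite T" "T \<subseteq> carrier G" "H = generate G T"
        using H(1) unfolding fin_gen_subgroup_def by blast
      have TN: "T \<subseteq> N" using T(3) H(2) by (auto intro: generate.incl)
      have "\<forall>t\<in>T. \<exists>w. t = word_val G w \<and> snd ` set w \<subseteq> M \<union> {g}"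
        using TN generate_words[OF G MgC] unfolding N_def by auto
      then obtain wt where wt: "\<forall>t\<in>T. t = word_val G (wt t) \<and> snd ` set (wt t) \<subseteq> M \<union> {g}"
        by metis
      define S0 where "S0 = (\<Union>t\<in>T. snd ` set (wt t)) \<inter> M"
      have fS0: "finite S0" unfolding S0_def using T(1) by auto
      have S0M: "S0 \<subseteq> M" unfolding S0_def by auto
      have S0gc: "S0 \<union> {g} \<subseteq> carrier G" using S0M Mc gc by auto
      have TS: "T \<subseteq> generate G (S0 \<union> {g})"
      proof
        fix t assume t: "t \<in> T"
        have "snd ` set (wt t) \<subseteq> S0 \<union> {g}" using wt t unfolding S0_def by blast
        then show "t \<in> generate G (S0 \<union> {g})" using wt t generate_words[OF G S0gc] by auto
      qed
      define K where "K = generate G (S0 \<union> D0 \<union> {a})"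
      have KC: "S0 \<union> D0 \<union> {a} \<subseteq> carrier G" using S0M D0(2) a(1) Mc by auto
      have KM: "K \<subseteq> M" unfolding K_def
        by (rule group.generate_subgroup_incl[OF G _ assms(4)]) (use S0M D0M a(1) in auto)
      have Kfg: "fin_gen_subgroup G K" unfolding fin_gen_subgroup_def K_def
        using KC fS0 D0(1) by (intro exI[of _ "S0 \<union> D0 \<union> {a}"]) auto
      obtain BK where BK: "finite BK" "free_basis G BK" "generate G BK = K" using lf_basis[OF assms(1) Kfg] by blast
      have aK: "a \<in> K" unfolding K_def by (auto intro: generate.incl)
      have bk_pos: "0 < card BK" by (rule basis_pos[OF G BK(3) aK a(2) BK(1)])
      have K_rank: "free_subgroup_rank G K (card BK)" unfolding free_subgroup_rank_def using BK by blast
      obtain F where F: "F \<subseteq> M" "free_subgroup_rank G F (mu_in G M K)" "K \<subseteq> F"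
        using mu_prop[OF bk_pos KM K_rank subset_refl] by blast
      have kpos: "0 < mu_in G M K" using mu_prop[OF bk_pos KM K_rank subset_refl] by blast
      have k1: "mu_in G M K \<le> m" using rank_upper[OF assms(6) Kfg KM] by simp
      have DK: "D \<subseteq> K" unfolding D0(3) K_def using group.mono_generate[OF G, of D0 "S0 \<union> D0 \<union> {a}"] by auto
      have k2: "m \<le> mu_in G M K"
        using mu_le[OF kpos _ F(2), of "carrier G" D] F(1) Mc DK F(3) assms(3) by auto
      obtain B where B: "finite B" "card B = m" "free_basis G B" "generate G B = F"
        using F(2) k1 k2 unfolding free_subgroup_rank_def by auto
      have Bc: "B \<subseteq> carrier G" using B(3) by (simp add: free_basis_def)
      have igc: "insert g B \<subseteq> carrier G" using Bc gc by auto
      have Lsub: "subgroup (generate G (insert g B)) G" by (rule group.generate_is_subgroup[OF G igc])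
      have "S0 \<union> {g} \<subseteq> generate G (insert g B)"
      proof -
        have "S0 \<subseteq> generate G B" using B(4) F(3) unfolding K_def by (auto intro: generate.incl)
        also have "\<dots> \<subseteq> generate G (insert g B)" by (rule group.mono_generate[OF G]) auto
        finally show ?thesis by (auto intro: generate.incl)
      qed
      then have "generate G (S0 \<union> {g}) \<subseteq> generate G (insert g B)"
        by (rule group.generate_subgroup_incl[OF G _ Lsub])
      moreover have "H \<subseteq> generate G (S0 \<union> {g})" unfolding T(3)
        by (rule group.generate_subgroup_incl[OF G TS group.generate_is_subgroup[OF G S0gc]])
      ultimately have "H \<subseteq> generate G (insert g B)" by blast
      then show ?thesis using B F(1) DK F(3) by blast
    qed
    have cover2: "\<exists>B C. finite B \<and> card B = m \<and> free_basis G B \<and> generate G B \<subseteq> M \<and> D \<subseteq> generate G B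
        \<and> finite C \<and> free_basis G C \<and> generate G C = generate G (insert g B) \<and> card C \<le> card (insert g B)
        \<and> mu_in G N H \<le> card C \<and> card (insert g B) \<le> m + 1"
      if H: "fin_gen_subgroup G H" "H \<subseteq> N" for H
    proof -
      obtain B where B: "finite B" "card B = m" "free_basis G B" "generate G B \<subseteq> M" "D \<subseteq> generate G B"
          "H \<subseteq> generate G (insert g B)" using cover[OF H] by blast
      have Bc: "B \<subseteq> carrier G" using B(3) by (simp add: free_basis_def)
      have igc: "insert g B \<subseteq> carrier G" using Bc gc by auto
      have Lfg: "fin_gen_subgroup G (generate G (insert g B))"
        unfolding fin_gen_subgroup_def using B(1) igc by blast
      obtain C where C: "finite C" "free_basis G C" "generate G C = generate G (insert g B)"
        using lf_basis[OF assms(1) Lfg] by blast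
      have gL: "g \<in> generate G (insert g B)" by (auto intro: generate.incl)
      have cpos: "0 < card C" by (rule basis_pos[OF G C(3) gL g1 C(1)])
      have cle: "card C \<le> card (insert g B)" using rank_le_gens[OF G C(2) C(1) _ igc C(3)] B(1) by simp
      have BN: "B \<subseteq> N" using B(4) MN by (auto intro: generate.incl)
      have LN: "generate G (insert g B) \<subseteq> N"
        by (rule group.generate_subgroup_incl[OF G _ Nsub]) (use BN gN in auto)
      have Lrank: "free_subgroup_rank G (generate G (insert g B)) (card C)"
        unfolding free_subgroup_rank_def using C by blast
      have "mu_in G N H \<le> card C" by (rule mu_le[OF cpos LN Lrank B(6)])
      moreover have "card (insert g B) \<le> m + 1" using B(1,2) by (simp add: card_insert_if)
      ultimately show ?thesis using B C cle by blast
    qed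
    have "rank_lf G N \<le> enat (m + 1)"
    proof (rule rank_least)
      fix H assume "fin_gen_subgroup G H" "H \<subseteq> N"
      then show "mu_in G N H \<le> m + 1" using cover2 by fastforce
    qed
    then have rank_eq: "rank_lf G N = enat (m + 1)" using a8 by (cases "rank_lf G N") auto
    obtain H where H: "fin_gen_subgroup G H" "H \<subseteq> N" "m < mu_in G N H" using rank_gt[OF a8] by blast
    obtain B C where BC: "finite B" "card B = m" "free_basis G B" "generate G B \<subseteq> M" "D \<subseteq> generate G B"
        "finite C" "free_basis G C" "generate G C = generate G (insert g B)" "card C \<le> card (insert g B)"
        "mu_in G N H \<le> card C" "card (insert g B) \<le> m + 1"
      using cover2[OF H(1,2)] by blast
    have ceq: "card C = card (insert g B)" using BC(9,10,11) H(3) by simp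
    have Bc: "B \<subseteq> carrier G" using BC(3) by (simp add: free_basis_def)
    have igc: "insert g B \<subseteq> carrier G" using Bc gc by auto
    have fbS: "free_basis G (insert g B)"
      by (rule hopf[OF G BC(7) BC(6) _ igc BC(8) ceq]) (use BC(1) in simp)
    have gB: "g \<notin> B" using BC(4) gM by (auto intro: generate.incl)
    have FP: "internal_free_product G (generate G B) (generate G {g})"
      by (rule free_product_from_basis[OF G fbS gB])
    have "free_subgroup_rank G (generate G B) m" unfolding free_subgroup_rank_def using BC(1,2,3) by blast
    then show ?thesis using rank_eq BC(4,5) FP unfolding N_def by blast
  qed
qed

end
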